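(* Let $X=\{x_j:j\in J\}\subset\mathbb{R}^2$ be finite and let $\mathcal{D}$ be any farthest point Delaunay triangulation of $X$. A point $s$ is the $1$-centre of $X$ if and only if there is a face $D$ of $\mathcal{D}$ such that $s\in\mathrm{int}(D)$ and $s\in V_D$.
   Context: The $1$-centre of $X$ is the centre of the minimum enclosing circle of $X$. $V(x_j)=\{s:\|s-x_j\|=\max_{i\in J}\|s-x_i\|\}$ are the regions of the farthest point Voronoi diagram. A farthest point Delaunay triangulation of $X$ is a triangulation of the extreme points of $X$ in which the circumcircle of every triangle encloses all of $X$; its faces are its vertices, edges and triangles. For a face $D$ with vertex index set $J_D$, $V_D=\bigcap_{j\in J_D}V(x_j)$. $\mathrm{int}$ denotes relative interior, with $\mathrm{int}(\{x\})=\{x\}$. *)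

theory Defs
  imports "HOL-Analysis.Analysis"
begin

type_synonym pt = "real^2"

definition fp_region :: "pt set \<Rightarrow> pt \<Rightarrow> pt set" where
  "fp_region X x = {s. dist s x = Max ((\<lambda>y. dist s y) ` X)}"

definition V_face :: "pt set \<Rightarrow> pt set \<Rightarrow> pt set" where
  "V_face X D = (\<Inter>x\<in>D. fp_region X x)"

definition is_1centre :: "pt set \<Rightarrow> pt \<Rightarrow> bool" where
  "is_1centre X s = (\<forall>t. Max ((\<lambda>y. dist s y) ` X) \<le> Max ((\<lambda>y. dist t y) ` X))"

definition extreme_pts :: "pt set \<Rightarrow> pt set" where
  "extreme_pts X = {x\<in>X. x extreme_point_of (convex hull X)}"

text \<open>A triangulation of the point set P, given as the set T of all its faces
  (vertex sets of vertices, edges and triangles): a geometric simplicial complex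
  whose vertex set is P and whose underlying space is the convex hull of P.\<close>
definition is_triangulation :: "pt set set \<Rightarrow> pt set \<Rightarrow> bool" where
  "is_triangulation T P \<longleftrightarrow>
     (\<forall>D\<in>T. D \<noteq> {} \<and> finite D \<and> D \<subseteq> P \<and> \<not> affine_dependent D) \<and>
     (\<forall>D\<in>T. \<forall>E. E \<noteq> {} \<and> E \<subseteq> D \<longrightarrow> E \<in> T) \<and>
     (\<forall>D\<in>T. \<forall>E\<in>T. convex hull D \<inter> convex hull E = convex hull (D \<inter> E)) \<and>
     (\<Union>D\<in>T. convex hull D) = convex hull P \<and>
     \<Union>T = P"

definition fp_delaunay :: "pt set \<Rightarrow> pt set set \<Rightarrow> bool" where
  "fp_delaunay X T \<longleftrightarrow>
     is_triangulation T (extreme_pts X) \<and>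
     (\<forall>D\<in>T. card D = 3 \<longrightarrow>
        (\<exists>c r. (\<forall>v\<in>D. dist c v = r) \<and> (\<forall>x\<in>X. dist c x \<le> r)))"

end

theory Submission
  imports Defs
begin

lemma variance:
  fixes D :: "'a::real_inner set"
  assumes "finite D" "sum u D = 1" "s = (\<Sum>v\<in>D. u v *\<^sub>R v)"
  shows "(\<Sum>v\<in>D. u v * (dist t v)^2) = (dist t s)^2 + (\<Sum>v\<in>D. u v * (dist s v)^2)"
proof -
  have e: "(dist t v)^2 = (dist t s)^2 + 2 * inner (t-s) (s-v) + (dist s v)^2" for v
  proof -
    have "(dist t v)^2 = inner (t - v) (t - v)" by (simp add: dist_norm power2_norm_eq_inner)
    also have "\<dots> = inner t t - 2 * inner t v + inner v v"
      by (simp add: inner_diff_left inner_diff_right inner_commute)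
    finally have 1: "(dist t v)^2 = inner t t - 2 * inner t v + inner v v" .
    have 2: "(dist t s)^2 = inner t t - 2 * inner t s + inner s s"
      by (simp add: dist_norm power2_norm_eq_inner inner_diff_left inner_diff_right inner_commute)
    have 3: "(dist s v)^2 = inner s s - 2 * inner s v + inner v v"
      by (simp add: dist_norm power2_norm_eq_inner inner_diff_left inner_diff_right inner_commute)
    have 4: "inner (t-s) (s-v) = inner t s - inner t v - inner s s + inner s v"
      by (simp add: inner_diff_left inner_diff_right inner_commute)
    show ?thesis unfolding 1 2 3 4 by simp
  qed
  have "(\<Sum>v\<in>D. u v *\<^sub>R (s - v)) = (\<Sum>v\<in>D. u v) *\<^sub>R s - (\<Sum>v\<in>D. u v *\<^sub>R v)"
    by (simp add: scaleR_diff_right sum_subtractf scaleR_sum_left)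
  also have "\<dots> = 0" using assms(2,3) by simp
  finally have z0: "(\<Sum>v\<in>D. u v *\<^sub>R (s - v)) = 0" .
  have z: "(\<Sum>v\<in>D. u v * inner (t-s) (s-v)) = 0"
  proof -
    have "(\<Sum>v\<in>D. u v * inner (t-s) (s-v)) = inner (t-s) (\<Sum>v\<in>D. u v *\<^sub>R (s - v))"
      by (simp add: inner_sum_right)
    then show ?thesis using z0 by simp
  qed
  have "(\<Sum>v\<in>D. u v * (dist t v)^2) = (\<Sum>v\<in>D. u v * (dist t s)^2 + 2 * (u v * inner (t-s) (s-v)) + u v * (dist s v)^2)"
  proof (rule sum.cong)
    fix v show "u v * (dist t v)^2 = u v * (dist t s)^2 + 2 * (u v * inner (t-s) (s-v)) + u v * (dist s v)^2"
      unfolding e[of v] by (simp add: ring_distribs mult.left_commute)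
  qed simp
  also have "\<dots> = (\<Sum>v\<in>D. u v) * (dist t s)^2 + 2 * (\<Sum>v\<in>D. u v * inner (t-s) (s-v)) + (\<Sum>v\<in>D. u v * (dist s v)^2)"
    by (simp add: sum.distrib sum_distrib_left sum_distrib_right)
  also have "\<dots> = (dist t s)^2 + (\<Sum>v\<in>D. u v * (dist s v)^2)"
    using assms(2) z by simp
  finally show ?thesis .
qed

lemma shrink:
  fixes D :: "'a::euclidean_space set"
  assumes "finite D" "\<not> affine_dependent D" "s \<in> convex hull D"
  obtains u where "\<forall>v\<in>D. 0 \<le> u v" "sum u D = 1" "s = (\<Sum>v\<in>D. u v *\<^sub>R v)"
    "{v\<in>D. 0 < u v} \<noteq> {}" "s \<in> rel_interior (convex hull {v\<in>D. 0 < u v})"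
proof -
  obtain u where u: "\<forall>v\<in>D. 0 \<le> u v" "sum u D = 1" "s = (\<Sum>v\<in>D. u v *\<^sub>R v)"
    using assms(3) convex_hull_finite[OF assms(1)] by auto
  let ?D = "{v\<in>D. 0 < u v}"
  have s1: "sum u ?D = sum u D"
    by (rule sum.mono_neutral_left) (use assms(1) u(1) in \<open>auto simp: order_le_less\<close>)
  have s2: "(\<Sum>v\<in>?D. u v *\<^sub>R v) = (\<Sum>v\<in>D. u v *\<^sub>R v)"
    by (rule sum.mono_neutral_left) (use assms(1) u(1) in \<open>auto simp: order_le_less\<close>)
  have ne: "?D \<noteq> {}"
  proof
    assume "?D = {}" then have "sum u ?D = 0" by (simp only: sum.empty)
    then show False using s1 u(2) by simp
  qed
  have ind: "\<not> affine_dependent ?D"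
    using assms(2) affine_dependent_subset by blast
  have "s \<in> rel_interior (convex hull ?D)"
    unfolding rel_interior_convex_hull_explicit[OF ind]
    using s1 s2 u by auto
  then show ?thesis using that u ne by blast
qed


lemma centre_in_hull:
  fixes X :: "(real^2) set"
  assumes X: "finite X" "X \<noteq> {}" and c: "is_1centre X s"
  shows "s \<in> convex hull {x\<in>X. dist s x = Max ((\<lambda>y. dist s y) ` X)}"
proof (rule ccontr)
  define r where "r = Max ((\<lambda>y. dist s y) ` X)"
  define F where "F = {x\<in>X. dist s x = r}"
  assume "s \<notin> convex hull {x\<in>X. dist s x = Max ((\<lambda>y. dist s y) ` X)}"
  then have ns: "s \<notin> convex hull F" by (simp add: F_def r_def)
  have fF: "finite F" using X by (simp add: F_def)
  have rX: "\<And>x. x \<in> X \<Longrightarrow> dist s x \<le> r" unfolding r_def using X by simp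
  have "r \<in> (\<lambda>y. dist s y) ` X" unfolding r_def using X by simp
  then have Fne: "F \<noteq> {}" by (auto simp: F_def)
  obtain a b where ab: "inner a s < b" "\<forall>x\<in>convex hull F. inner a x > b"
    using separating_hyperplane_closed_point[OF convex_convex_hull _ ns]
      compact_imp_closed[OF finite_imp_compact_convex_hull[OF fF]] by blast
  have aF: "\<And>x. x \<in> F \<Longrightarrow> inner a (x - s) > 0"
    using ab hull_subset[of F convex] by (force simp: inner_diff_right)
  define \<delta> where "\<delta> = Min ((\<lambda>x. inner a (x - s)) ` F)"
  have dpos: "\<delta> > 0" unfolding \<delta>_def using fF Fne aF by simp
  have dle: "\<And>x. x \<in> F \<Longrightarrow> \<delta> \<le> inner a (x - s)" unfolding \<delta>_def using fF by simp
  have a0: "a \<noteq> 0" using aF Fne by force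
  then have na: "norm a > 0" by simp
  define G where "G = X - F"
  define m where "m = (if G = {} then r - 1 else Max ((\<lambda>y. dist s y) ` G))"
  have mr: "m < r"
  proof (cases "G = {}")
    case True then show ?thesis by (simp add: m_def)
  next
    case False
    have "finite G" using X by (simp add: G_def)
    moreover have "\<forall>y\<in>G. dist s y < r" using rX by (force simp: G_def F_def)
    ultimately show ?thesis using False by (simp add: m_def)
  qed
  have mG: "\<And>x. x \<in> G \<Longrightarrow> dist s x \<le> m"
    unfolding m_def using X by (auto simp: G_def)
  define \<epsilon> where "\<epsilon> = min (\<delta> / (norm a)^2) ((r - m) / (2 * norm a))"
  have epos: "\<epsilon> > 0" unfolding \<epsilon>_def using dpos na mr by simp
  have e1: "\<epsilon> * (norm a)^2 \<le> \<delta>"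
    unfolding \<epsilon>_def using na by (simp add: min_def field_simps)
  have e2: "2 * (\<epsilon> * norm a) \<le> r - m"
    unfolding \<epsilon>_def using na by (simp add: min_def field_simps)
  define t where "t = s + \<epsilon> *\<^sub>R a"
  have lt: "dist t x < r" if x: "x \<in> X" for x
  proof (cases "x \<in> F")
    case True
    have "(dist t x)^2 = inner ((s - x) + \<epsilon> *\<^sub>R a) ((s - x) + \<epsilon> *\<^sub>R a)"
      by (simp add: t_def dist_norm power2_norm_eq_inner algebra_simps)
    also have "\<dots> = (dist s x)^2 - 2 * \<epsilon> * inner a (x - s) + \<epsilon> * (\<epsilon> * (norm a)^2)"
      by (simp add: dist_norm power2_norm_eq_inner inner_add_left inner_add_right
          inner_diff_left inner_diff_right inner_commute algebra_simps)
    also have "\<dots> \<le> r^2 - 2 * \<epsilon> * \<delta> + \<epsilon> * \<delta>"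
    proof -
      have "2 * \<epsilon> * \<delta> \<le> 2 * \<epsilon> * inner a (x - s)" using dle[OF True] epos by simp
      moreover have "\<epsilon> * (\<epsilon> * (norm a)^2) \<le> \<epsilon> * \<delta>" using e1 epos by simp
      moreover have "(dist s x)^2 = r^2" using True by (simp add: F_def)
      ultimately show ?thesis by linarith
    qed
    also have "\<dots> < r^2" using epos dpos by simp
    finally have "(dist t x)^2 < r^2" .
    then show ?thesis using power_less_imp_less_base by (metis zero_le_dist dist_commute rX x order_trans)
  next
    case False
    then have "x \<in> G" using x by (simp add: G_def)
    have "dist t x \<le> dist s x + dist t s" by (metis dist_commute dist_triangle)
    also have "dist t s = \<epsilon> * norm a" using epos by (simp add: t_def dist_norm)
    finally show ?thesis using mG[OF \<open>x\<in>G\<close>] e2 mr by linarith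
  qed
  have "Max ((\<lambda>y. dist t y) ` X) < r" using X lt by simp
  moreover have "r \<le> Max ((\<lambda>y. dist t y) ` X)" using c unfolding is_1centre_def r_def by blast
  ultimately show False by simp
qed


lemma interior_Union_closed_empty:
  fixes \<A> :: "'a::topological_space set set"
  assumes "finite \<A>" "\<And>A. A \<in> \<A> \<Longrightarrow> closed A \<and> interior A = {}"
  shows "interior (\<Union>\<A>) = {}"
  using assms
proof (induction \<A> rule: finite_induct)
  case empty then show ?case by simp
next
  case (insert A \<A>)
  then have "interior (\<Union>\<A>) = {}" by blast
  then have "interior (A \<union> \<Union>\<A>) = interior A"
    using interior_closed_Un_empty_interior insert.prems by blast
  then show ?case using insert.prems by simp
qed

lemma card_le_aff:
  fixes D :: "(real^2) set"
  assumes "finite D" "\<not> affine_dependent D" "aff_dim D \<le> k"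
  shows "int (card D) \<le> k + 1"
  using aff_dim_affine_independent[OF assms(2)] assms(3) by simp

lemma rev_dir:
  fixes X :: "(real^2) set" and D :: "(real^2) set"
  assumes X: "finite X" "X \<noteq> {}" and D: "finite D" "D \<noteq> {}" "D \<subseteq> X"
    and s: "s \<in> convex hull D" and V: "\<forall>v\<in>D. dist s v = Max ((\<lambda>y. dist s y) ` X)"
  shows "is_1centre X s"
  unfolding is_1centre_def
proof
  fix t
  define r where "r = Max ((\<lambda>y. dist s y) ` X)"
  define M where "M = Max ((\<lambda>y. dist t y) ` X)"
  show "Max ((\<lambda>y. dist s y) ` X) \<le> Max ((\<lambda>y. dist t y) ` X)"
  proof (rule ccontr)
    assume "\<not> ?thesis"
    then have Mr: "M < r" by (simp add: M_def r_def)
    obtain u where u: "\<forall>v\<in>D. 0 \<le> u v" "sum u D = 1" "s = (\<Sum>v\<in>D. u v *\<^sub>R v)"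
      using s convex_hull_finite[OF D(1)] by auto
    obtain x0 where "x0 \<in> X" using X by blast
    then have "dist t x0 \<le> M" unfolding M_def using X by simp
    then have M0: "0 \<le> M" using zero_le_dist order_trans by blast
    have "(\<Sum>v\<in>D. u v * (dist t v)^2) \<le> (\<Sum>v\<in>D. u v * M^2)"
    proof (rule sum_mono)
      fix v assume v: "v \<in> D"
      have "dist t v \<le> M" unfolding M_def using X v D(3) by auto
      then have "(dist t v)^2 \<le> M^2" by (intro power_mono) auto
      then show "u v * (dist t v)^2 \<le> u v * M^2" using u(1) v by (simp add: mult_left_mono)
    qed
    also have "\<dots> = (\<Sum>v\<in>D. u v) * M^2" by (rule sum_distrib_right[symmetric])
    also have "\<dots> = M^2" using u(2) by simp
    also have "\<dots> < r^2" using M0 Mr by (intro power_strict_mono) auto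
    also have "r^2 = (\<Sum>v\<in>D. u v) * r^2" using u(2) by simp
    also have "\<dots> = (\<Sum>v\<in>D. u v * r^2)" by (rule sum_distrib_right)
    also have "\<dots> = (\<Sum>v\<in>D. u v * (dist s v)^2)"
    proof (rule sum.cong)
      fix v assume "v \<in> D" then have "dist s v = r" using V unfolding r_def by blast
      then show "u v * r^2 = u v * (dist s v)^2" by simp
    qed simp
    also have "\<dots> \<le> (dist t s)^2 + (\<Sum>v\<in>D. u v * (dist s v)^2)" by simp
    also have "\<dots> = (\<Sum>v\<in>D. u v * (dist t v)^2)"
      using variance[OF D(1) u(2,3), where t=t] by simp
    finally show False by simp
  qed
qed


lemma sum_const_mult: "sum u D = (1::real) \<Longrightarrow> (\<Sum>v\<in>D. u v * k) = k"
  by (metis sum_distrib_right mult_1)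

theorem lemma6:
  fixes X :: "(real^2) set" and T :: "(real^2) set set" and s :: "real^2"
  assumes "finite X" and "X \<noteq> {}" and "fp_delaunay X T"
  shows "is_1centre X s \<longleftrightarrow>
           (\<exists>D\<in>T. s \<in> rel_interior (convex hull D) \<and> s \<in> V_face X D)"
proof -
  define P where "P = extreme_pts X"
  have tri: "is_triangulation T P" and del: "\<forall>D\<in>T. card D = 3 \<longrightarrow>
        (\<exists>c r. (\<forall>v\<in>D. dist c v = r) \<and> (\<forall>x\<in>X. dist c x \<le> r))"
    using assms(3) by (auto simp: fp_delaunay_def P_def)
  have tri': "(\<forall>D\<in>T. D \<noteq> {} \<and> finite D \<and> D \<subseteq> P \<and> \<not> affine_dependent D) \<and>
     (\<forall>D\<in>T. \<forall>E. E \<noteq> {} \<and> E \<subseteq> D \<longrightarrow> E \<in> T) \<and>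
     (\<forall>D\<in>T. \<forall>E\<in>T. convex hull D \<inter> convex hull E = convex hull (D \<inter> E)) \<and>
     (\<Union>D\<in>T. convex hull D) = convex hull P \<and> \<Union>T = P"
    using tri unfolding is_triangulation_def .
  note c1 = conjunct1[OF tri'] and c2 = conjunct1[OF conjunct2[OF tri']]
    and c4 = conjunct1[OF conjunct2[OF conjunct2[OF conjunct2[OF tri']]]]
  have T1: "\<And>D. D \<in> T \<Longrightarrow> D \<noteq> {} \<and> finite D \<and> D \<subseteq> P \<and> \<not> affine_dependent D"
    using c1 by blast
  have T2: "\<And>D E. D \<in> T \<Longrightarrow> E \<noteq> {} \<Longrightarrow> E \<subseteq> D \<Longrightarrow> E \<in> T"
    using c2 by blast
  have T4: "(\<Union>D\<in>T. convex hull D) = convex hull P"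
    by (rule c4)
  have PX: "P \<subseteq> X" by (auto simp: P_def extreme_pts_def)
  have Pext: "\<And>a. a \<in> P \<Longrightarrow> a extreme_point_of (convex hull X)"
    by (auto simp: P_def extreme_pts_def)
  have "{x. x extreme_point_of (convex hull X)} = P"
    by (auto simp: P_def extreme_pts_def dest: extreme_point_of_convex_hull)
  then have hullP: "convex hull P = convex hull X"
    using Krein_Milman_polytope[OF assms(1)] by metis
  have VF: "s \<in> V_face X D \<longleftrightarrow> (\<forall>v\<in>D. dist s v = Max ((\<lambda>y. dist s y) ` X))" for D
    by (auto simp: V_face_def fp_region_def)
  show ?thesis
  proof
    assume c: "is_1centre X s"
    define r where "r = Max ((\<lambda>y. dist s y) ` X)"
    define F where "F = {x\<in>X. dist s x = r}"
    have sF: "s \<in> convex hull F"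
      using centre_in_hull[OF assms(1,2) c] by (simp add: F_def r_def)
    have FX: "F \<subseteq> X" by (auto simp: F_def)
    have fF: "finite F" using assms(1) FX finite_subset by blast
    have rX: "\<And>x. x \<in> X \<Longrightarrow> dist s x \<le> r" unfolding r_def using assms(1) by simp
    have sX: "s \<in> convex hull X" using sF FX hull_mono by blast
    have key: "\<exists>D\<in>T. s \<in> rel_interior (convex hull D) \<and> (\<forall>v\<in>D. dist s v = r)"
    proof (cases "interior (convex hull X) = {}")
      case False
      have finT: "finite T"
      proof -
        have "T \<subseteq> Pow P" using T1 by blast
        moreover have "finite P" using PX assms(1) finite_subset by blast
        ultimately show ?thesis by (meson finite_Pow_iff finite_subset)
      qed
      define U where "U = \<Union>((\<lambda>D. convex hull D) ` {D\<in>T. card D = 3})"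
      define L where "L = \<Union>((\<lambda>D. convex hull D) ` {D\<in>T. card D \<noteq> 3})"
      have "convex hull X = (\<Union>D\<in>T. convex hull D)" using T4 hullP by simp
      also have "\<dots> = U \<union> L" unfolding U_def L_def by blast
      finally have XUL: "convex hull X = U \<union> L" .
      have clU: "closed U" unfolding U_def
        using finT T1 by (intro closed_Union) (auto intro!: compact_imp_closed finite_imp_compact_convex_hull)
      have intL: "interior L = {}" unfolding L_def
      proof (rule interior_Union_closed_empty)
        show "finite ((\<lambda>D. convex hull D) ` {D \<in> T. card D \<noteq> 3})" using finT by simp
      next
        fix A assume "A \<in> (\<lambda>D. convex hull D) ` {D \<in> T. card D \<noteq> 3}"
        then obtain D where D: "D \<in> T" "card D \<noteq> 3" "A = convex hull D" by blast
        have "closed A" using D T1 by (auto intro!: compact_imp_closed finite_imp_compact_convex_hull)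
        moreover have "interior A = {}"
        proof -
          have "of_nat (card D) = aff_dim D + 1" using aff_dim_affine_independent T1 D(1) by blast
          moreover have "aff_dim D \<le> 2" using aff_dim_le_DIM[of D] by simp
          ultimately have "aff_dim D \<le> 1" using D(2) by linarith
          then have "\<not> aff_dim A = int (DIM(real^2))" using D(3) aff_dim_convex_hull[of D] by simp
          then show ?thesis by (rule low_dim_interior)
        qed
        ultimately show "closed A \<and> interior A = {}" by blast
      qed
      have i1: "interior (convex hull X) = interior U"
        using interior_closed_Un_empty_interior[OF clU intL] XUL by simp
      have "interior (convex hull X) \<subseteq> U" unfolding i1 by (rule interior_subset)
      then have c1: "closure (interior (convex hull X)) \<subseteq> U"
        by (rule closure_minimal[OF _ clU])
      have clX: "closed (convex hull X)"
        by (rule compact_imp_closed[OF finite_imp_compact_convex_hull[OF assms(1)]])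
      have "closure (interior (convex hull X)) = closure (convex hull X)"
        by (rule convex_closure_interior[OF convex_convex_hull False])
      also have "\<dots> = convex hull X" by (rule closure_closed[OF clX])
      finally have "convex hull X \<subseteq> U" using c1 by simp
      then have "s \<in> U" using sX by blast
      then obtain D where D: "D \<in> T" "card D = 3" "s \<in> convex hull D" by (auto simp: U_def)
      obtain cc \<rho> where cr: "\<forall>v\<in>D. dist cc v = \<rho>" "\<forall>x\<in>X. dist cc x \<le> \<rho>" using del D by blast
      have fD: "finite D" and iD: "\<not> affine_dependent D" and DX: "D \<subseteq> X" using T1 D(1) PX by blast+
      obtain u where u: "\<forall>v\<in>D. 0 \<le> u v" "sum u D = 1" "s = (\<Sum>v\<in>D. u v *\<^sub>R v)"
        "{v\<in>D. 0 < u v} \<noteq> {}" "s \<in> rel_interior (convex hull {v\<in>D. 0 < u v})"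
        using shrink[OF fD iD D(3)] by blast
      have D'T: "{v\<in>D. 0 < u v} \<in> T" using T2[OF D(1) u(4)] by blast
      obtain \<mu> where \<mu>: "\<forall>x\<in>F. 0 \<le> \<mu> x" "sum \<mu> F = 1" "s = (\<Sum>x\<in>F. \<mu> x *\<^sub>R x)"
        using sF convex_hull_finite[OF fF] by auto
      have "(\<Sum>x\<in>F. \<mu> x * (dist cc x)^2) = (dist cc s)^2 + (\<Sum>x\<in>F. \<mu> x * (dist s x)^2)"
        using variance[OF fF \<mu>(2,3), where t=cc] by simp
      moreover have "(\<Sum>x\<in>F. \<mu> x * (dist s x)^2) = (\<Sum>x\<in>F. \<mu> x * r^2)"
        by (rule sum.cong) (auto simp: F_def)
      moreover have "(\<Sum>x\<in>F. \<mu> x * r^2) = r^2" using sum_const_mult[OF \<mu>(2)] .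
      moreover have "(\<Sum>x\<in>F. \<mu> x * (dist cc x)^2) \<le> (\<Sum>x\<in>F. \<mu> x * \<rho>^2)"
      proof (rule sum_mono)
        fix x assume x: "x \<in> F"
        have "(dist cc x)^2 \<le> \<rho>^2" using cr(2) x FX by (intro power_mono) auto
        then show "\<mu> x * (dist cc x)^2 \<le> \<mu> x * \<rho>^2" using \<mu>(1) x by (simp add: mult_left_mono)
      qed
      moreover have "(\<Sum>x\<in>F. \<mu> x * \<rho>^2) = \<rho>^2" using sum_const_mult[OF \<mu>(2)] .
      ultimately have ineq1: "(dist cc s)^2 + r^2 \<le> \<rho>^2" by linarith
      have "(\<Sum>v\<in>D. u v * (dist cc v)^2) = (dist cc s)^2 + (\<Sum>v\<in>D. u v * (dist s v)^2)"
        using variance[OF fD u(2,3), where t=cc] by simp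
      moreover have "(\<Sum>v\<in>D. u v * (dist cc v)^2) = (\<Sum>v\<in>D. u v * \<rho>^2)"
        by (rule sum.cong) (auto simp: cr(1))
      moreover have "(\<Sum>v\<in>D. u v * \<rho>^2) = \<rho>^2" using sum_const_mult[OF u(2)] .
      ultimately have ineq2: "r^2 \<le> (\<Sum>v\<in>D. u v * (dist s v)^2)" using ineq1 by linarith
      have "\<forall>v\<in>{v\<in>D. 0 < u v}. dist s v = r"
      proof (rule ccontr)
        assume "\<not> ?thesis"
        then obtain v0 where v0: "v0 \<in> D" "0 < u v0" "dist s v0 \<noteq> r" by blast
        then have "dist s v0 < r" using rX DX by force
        then have lt0: "(dist s v0)^2 < r^2" by (intro power_strict_mono) auto
        have "(\<Sum>v\<in>D. u v * (dist s v)^2) < (\<Sum>v\<in>D. u v * r^2)"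
        proof (rule sum_strict_mono_ex1[OF fD])
          show "\<forall>v\<in>D. u v * (dist s v)^2 \<le> u v * r^2"
          proof
            fix v assume v: "v \<in> D"
            have "(dist s v)^2 \<le> r^2" using rX v DX by (intro power_mono) auto
            then show "u v * (dist s v)^2 \<le> u v * r^2" using u(1) v by (simp add: mult_left_mono)
          qed
          have "u v0 * (dist s v0)^2 < u v0 * r^2" using v0(2) lt0 by simp
          then show "\<exists>v\<in>D. u v * (dist s v)^2 < u v * r^2" using v0(1) by blast
        qed
        also have "\<dots> = r^2" using sum_const_mult[OF u(2)] .
        finally show False using ineq2 by linarith
      qed
      then show ?thesis using D'T u(5) by blast
    next
      case True
      have adX: "aff_dim X \<le> 1"
      proof -
        have "aff_dim (convex hull X) \<noteq> 2"
        proof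
          assume "aff_dim (convex hull X) = 2"
          then have "interior (convex hull X) = rel_interior (convex hull X)"
            using interior_rel_interior_gen[of "convex hull X"] by simp
          moreover have "rel_interior (convex hull X) \<noteq> {}"
            using rel_interior_eq_empty[OF convex_convex_hull, of X] assms(2) by simp
          ultimately show False using True by simp
        qed
        moreover have "aff_dim (convex hull X) \<le> 2" using aff_dim_le_DIM[of "convex hull X"] by simp
        ultimately show ?thesis using aff_dim_convex_hull[of X] by simp
      qed
      have "s \<in> (\<Union>D\<in>T. convex hull D)" using sX T4 hullP by simp
      then obtain D where D: "D \<in> T" "s \<in> convex hull D" by blast
      have fD: "finite D" and iD: "\<not> affine_dependent D" using T1 D(1) by blast+
      obtain u where u: "\<forall>v\<in>D. 0 \<le> u v" "sum u D = 1" "s = (\<Sum>v\<in>D. u v *\<^sub>R v)"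
        "{v\<in>D. 0 < u v} \<noteq> {}" "s \<in> rel_interior (convex hull {v\<in>D. 0 < u v})"
        using shrink[OF fD iD D(2)] by blast
      define D' where "D' = {v\<in>D. 0 < u v}"
      have D'T: "D' \<in> T" using T2[OF D(1) u(4)] by (simp add: D'_def)
      have fD': "finite D'" and iD': "\<not> affine_dependent D'" and D'P: "D' \<subseteq> P" and neD': "D' \<noteq> {}"
        using T1[OF D'T] by blast+
      have sD': "s \<in> rel_interior (convex hull D')" using u(5) by (simp add: D'_def)
      have "aff_dim D' \<le> aff_dim X" using D'P PX aff_dim_subset by blast
      then have "of_nat (card D') \<le> (2::int)" using aff_dim_affine_independent[OF iD'] adX by linarith
      moreover have "card D' \<noteq> 0" using fD' neD' by simp
      ultimately have "card D' = 1 \<or> card D' = 2" by linarith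
      then have "\<forall>v\<in>D'. dist s v = r"
      proof
        assume "card D' = 1"
        then obtain a where a: "D' = {a}" by (auto simp: card_1_singleton_iff)
        then have sa: "s = a" using sD' by simp
        have "a \<in> P" using D'P a by blast
        then have ae: "a extreme_point_of (convex hull X)" by (rule Pext)
        have sub: "convex hull F \<subseteq> convex hull X" using FX by (rule hull_mono)
        have aF: "a \<in> convex hull F" using sF sa by simp
        have "\<forall>p\<in>convex hull F. \<forall>q\<in>convex hull F. a \<notin> open_segment p q"
          using ae sub unfolding extreme_point_of_def by blast
        then have "a extreme_point_of (convex hull F)"
          using aF unfolding extreme_point_of_def by blast
        then have "a \<in> F" by (rule extreme_point_of_convex_hull)
        then have "dist s a = r" by (simp add: F_def)
        then show ?thesis using a by simp
      next
        assume "card D' = 2"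
        then obtain a b where ab: "D' = {a,b}" "a \<noteq> b" by (auto simp: card_2_iff)
        have sab: "s \<in> open_segment a b"
          using sD' ab rel_interior_closed_segment[of a b] segment_convex_hull[of a b] by simp
        have aP: "a \<in> P" and bP: "b \<in> P" using D'P ab by blast+
        have ae: "a extreme_point_of (convex hull X)" using aP by (rule Pext)
        have be: "b extreme_point_of (convex hull X)" using bP by (rule Pext)
        have aX: "a \<in> X" and bX: "b \<in> X" using D'P PX ab by blast+
        have Fab: "F \<subseteq> {a,b}"
        proof
          fix x assume xF: "x \<in> F"
          show "x \<in> {a,b}"
          proof (rule ccontr)
            assume xab: "x \<notin> {a,b}"
            have xX: "x \<in> X" using xF FX by blast
            have "aff_dim {a,b,x} \<le> aff_dim X" using aX bX xX by (intro aff_dim_subset) auto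
            then have "aff_dim {a,b,x} \<le> 1" using adX by linarith
            then have "collinear {a,b,x}" by (simp add: collinear_aff_dim)
            then have "between (b,x) a \<or> between (x,a) b \<or> between (a,b) x"
              by (rule collinear_between_cases[THEN iffD1])
            moreover have "\<not> between (b,x) a"
            proof
              assume "between (b,x) a"
              then have "a \<in> open_segment b x" using ab(2) xab
                by (simp add: between_mem_segment open_segment_def, metis)
              moreover have "b \<in> convex hull X" "x \<in> convex hull X" using bX xX hull_subset[of X convex] by auto
              ultimately show False using ae unfolding extreme_point_of_def by blast
            qed
            moreover have "\<not> between (x,a) b"
            proof
              assume "between (x,a) b"
              then have "b \<in> open_segment x a" using ab(2) xab
                by (simp add: between_mem_segment open_segment_def, metis)
              moreover have "a \<in> convex hull X" "x \<in> convex hull X" using aX xX hull_subset[of X convex] by auto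
              ultimately show False using be unfolding extreme_point_of_def by blast
            qed
            moreover have "\<not> between (a,b) x"
            proof
              assume "between (a,b) x"
              then have "x \<in> open_segment a b" using xab
                by (simp add: between_mem_segment open_segment_def)
              then have "dist s x < dist s a \<or> dist s x < dist s b"
                by (rule dist_decreases_open_segment)
              moreover have "dist s x = r" using xF by (simp add: F_def)
              ultimately show False using rX[OF aX] rX[OF bX] by linarith
            qed
            ultimately show False by blast
          qed
        qed
        have "a \<in> F"
        proof (rule ccontr)
          assume "a \<notin> F"
          then have "F \<subseteq> {b}" using Fab by blast
          then have "convex hull F \<subseteq> convex hull {b}" by (rule hull_mono)
          then have "convex hull F \<subseteq> {b}" by simp
          then have "s = b" using sF by blast
          then show False using sab by (simp add: open_segment_def)
        qed
        have "b \<in> F"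
        proof (rule ccontr)
          assume "b \<notin> F"
          then have "F \<subseteq> {a}" using Fab by blast
          then have "convex hull F \<subseteq> convex hull {a}" by (rule hull_mono)
          then have "convex hull F \<subseteq> {a}" by simp
          then have "s = a" using sF by blast
          then show False using sab by (simp add: open_segment_def)
        qed
        then show ?thesis using \<open>a \<in> F\<close> ab(1) by (auto simp: F_def)
      qed
      then show ?thesis using D'T sD' by blast
    qed
    then show "\<exists>D\<in>T. s \<in> rel_interior (convex hull D) \<and> s \<in> V_face X D"
      using VF r_def by auto
  next
    assume "\<exists>D\<in>T. s \<in> rel_interior (convex hull D) \<and> s \<in> V_face X D"
    then obtain D where D: "D \<in> T" "s \<in> rel_interior (convex hull D)" "s \<in> V_face X D" by blast
    have "finite D" "D \<noteq> {}" "D \<subseteq> X" using T1[OF D(1)] PX by auto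
    moreover have "s \<in> convex hull D" using D(2) rel_interior_subset by blast
    ultimately show "is_1centre X s" using rev_dir[OF assms(1,2)] D(3) VF by blast
  qed
qed

end
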